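(* For every integer $k\ge 1$ and every real $t$, $$R_{k}(t^{2})=-R_{k-1}(t^{2})+4t\,T_{2k-1}(t)+(-1)^{k-1}8t^{2}.$$ Consequently, for every $t\in(0,1]$ and every integer $k\ge 0$, $$\frac{|R_{k}(t^{2})|}{t}\leq 4(2k+1)t+4\sum_{j=1}^{k}\min\{1,(2j-1)t\}.$$
   Context: $T_k$ denotes the Chebyshev polynomial of the first kind: $T_0(t)=1$, $T_1(t)=t$, $T_{k+1}(t)=2tT_k(t)-T_{k-1}(t)$. For each integer $k\ge 0$, $P_k$ and $Q_k$ are the unique polynomials such that $T_{2k}(t)=(-1)^k+P_k(t^2)$ and $T_{2k+1}(t)=(-1)^k(2k+1)t+t\,Q_k(t^2)$ for all real $t$ (so $P_k(0)=Q_k(0)=0$). For $k\ge 0$ define $R_k(x):=2P_k(x)-4(-1)^k(2k+1)x$. *)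

theory Defs
  imports "HOL-Analysis.Analysis" "HOL-Computational_Algebra.Polynomial"
begin

fun cheb_T :: "nat \<Rightarrow> real \<Rightarrow> real" where
  "cheb_T 0 t = 1"
| "cheb_T (Suc 0) t = t"
| "cheb_T (Suc (Suc n)) t = 2 * t * cheb_T (Suc n) t - cheb_T n t"

definition cheb_P :: "nat \<Rightarrow> real poly" where
  "cheb_P k = (THE p. \<forall>t::real. cheb_T (2*k) t = (-1)^k + poly p (t^2))"

definition cheb_R :: "nat \<Rightarrow> real \<Rightarrow> real" where
  "cheb_R k x = 2 * poly (cheb_P k) x - 4 * (-1)^k * (2 * real k + 1) * x"

end

theory Submission
  imports Defs
begin

lemma cheb_T_cos2: "cheb_T n (cos x) = cos (real n * x) \<and> cheb_T (Suc n) (cos x) = cos (real (Suc n) * x)"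
proof (induction n)
  case (Suc n)
  have "cos (real (Suc (Suc n)) * x) = 2 * cos x * cos (real (Suc n) * x) - cos (real n * x)"
  proof -
    have a: "real (Suc (Suc n)) * x = real (Suc n) * x + x" by (simp add: algebra_simps)
    have b: "real n * x = real (Suc n) * x - x" by (simp add: algebra_simps)
    show ?thesis unfolding a b cos_add cos_diff by (simp add: algebra_simps)
  qed
  then show ?case using Suc by simp
qed auto

lemma cheb_T_cos: "cheb_T n (cos x) = cos (real n * x)"
  using cheb_T_cos2 by blast

lemma sin_mult_bound: "\<bar>sin (real n * x)\<bar> \<le> real n * \<bar>sin x\<bar>"
proof (induction n)
  case (Suc n)
  have "sin (real (Suc n) * x) = sin (real n * x) * cos x + cos (real n * x) * sin x"
  proof -
    have "real (Suc n) * x = real n * x + x" by (simp add: algebra_simps)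
    then show ?thesis by (simp only: sin_add)
  qed
  also have "\<bar>\<dots>\<bar> \<le> \<bar>sin (real n * x)\<bar> * \<bar>cos x\<bar> + \<bar>cos (real n * x)\<bar> * \<bar>sin x\<bar>"
    by (metis abs_mult abs_triangle_ineq)
  also have "\<dots> \<le> \<bar>sin (real n * x)\<bar> + \<bar>sin x\<bar>"
    by (intro add_mono mult_left_le mult_left_le_one_le) (auto simp: abs_cos_le_one)
  also have "\<dots> \<le> real (Suc n) * \<bar>sin x\<bar>" using Suc by (simp add: algebra_simps)
  finally show ?case .
qed simp

lemma cheb_T_le1: "\<bar>t\<bar> \<le> 1 \<Longrightarrow> \<bar>cheb_T n t\<bar> \<le> 1"
proof -
  assume "\<bar>t\<bar> \<le> 1"
  then have "t = cos (arccos t)" by simp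
  then show ?thesis by (metis cheb_T_cos abs_cos_le_one)
qed

lemma cheb_T_odd_bound:
  assumes "\<bar>t\<bar> \<le> 1"
  shows "\<bar>cheb_T (2*m+1) t\<bar> \<le> real (2*m+1) * \<bar>t\<bar>"
proof -
  define y where "y = arcsin t"
  have ty: "t = sin y" using assms unfolding y_def by simp
  have "t = cos (pi/2 - y)" using ty by (simp add: cos_diff)
  then have "cheb_T (2*m+1) t = cos (real (2*m+1) * (pi/2 - y))" by (metis cheb_T_cos)
  also have "real (2*m+1) * (pi/2 - y) = (real m * pi + pi/2) - real (2*m+1) * y"
    by (simp add: algebra_simps)
  also have "cos \<dots> = (-1)^m * sin (real (2*m+1) * y)"
    by (simp add: cos_diff cos_add sin_add)
  finally have "\<bar>cheb_T (2*m+1) t\<bar> = \<bar>sin (real (2*m+1) * y)\<bar>" by (simp add: abs_mult)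
  also have "\<dots> \<le> real (2*m+1) * \<bar>t\<bar>" using sin_mult_bound ty by metis
  finally show ?thesis .
qed

lemma cheb_T_even_odd:
  "\<exists>a b. (\<forall>t. cheb_T (2*n) t = poly a (t^2)) \<and> (\<forall>t. cheb_T (2*n+1) t = t * poly b (t^2))"
proof (induction n)
  case 0
  show ?case by (rule exI[of _ "[:1:]"], rule exI[of _ "[:1:]"]) simp
next
  case (Suc n)
  then obtain a b where a: "\<And>t. cheb_T (2*n) t = poly a (t^2)"
    and b: "\<And>t. cheb_T (2*n+1) t = t * poly b (t^2)" by blast
  define a' where "a' = smult 2 (pCons 0 b) - a"
  have a': "cheb_T (2*Suc n) t = poly a' (t^2)" for t
  proof -
    have "cheb_T (2*Suc n) t = 2 * t * cheb_T (2*n+1) t - cheb_T (2*n) t"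
      by (simp add: numeral_2_eq_2)
    then show ?thesis using a b by (simp add: a'_def power2_eq_square algebra_simps)
  qed
  define b' where "b' = smult 2 a' - b"
  have "cheb_T (2*Suc n+1) t = t * poly b' (t^2)" for t
  proof -
    have "cheb_T (2*Suc n+1) t = 2 * t * cheb_T (2*Suc n) t - cheb_T (2*n+1) t"
      by (simp add: numeral_2_eq_2)
    then show ?thesis using a' b by (simp add: b'_def algebra_simps)
  qed
  then show ?case using a' by blast
qed

lemma poly_sq_unique:
  fixes p q :: "real poly"
  assumes "\<forall>t::real. poly p (t^2) = poly q (t^2)"
  shows "p = q"
proof -
  have "{0..} \<subseteq> {x. poly (p - q) x = 0}"
  proof
    fix x :: real assume "x \<in> {0..}"
    then have "x = (sqrt x)^2" by simp
    then have "poly p x = poly q x" using assms by metis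
    then show "x \<in> {x. poly (p - q) x = 0}" by simp
  qed
  moreover have "infinite ({0..} :: real set)" by (simp add: infinite_Ici)
  ultimately have "infinite {x. poly (p - q) x = 0}" using finite_subset by blast
  then have "p - q = 0" using poly_roots_finite by blast
  then show ?thesis by simp
qed

lemma cheb_P_eq: "poly (cheb_P k) (t^2) = cheb_T (2*k) t - (-1)^k"
proof -
  obtain a where a: "\<And>t. cheb_T (2*k) t = poly a (t^2)" using cheb_T_even_odd by blast
  define p where "p = a - [:(-1)^k:]"
  have ex: "\<forall>t::real. cheb_T (2*k) t = (-1)^k + poly p (t^2)" using a by (simp add: p_def)
  have "\<exists>!p. \<forall>t::real. cheb_T (2*k) t = (-1)^k + poly p (t^2)"
  proof (rule ex1I[of _ p])
    fix q assume "\<forall>t::real. cheb_T (2*k) t = (-1)^k + poly q (t^2)"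
    with ex have "\<forall>t::real. poly q (t^2) = poly p (t^2)" by (metis add_left_cancel)
    then show "q = p" by (rule poly_sq_unique)
  qed (rule ex)
  from theI'[OF this] have "\<forall>t::real. cheb_T (2*k) t = (-1)^k + poly (cheb_P k) (t^2)"
    unfolding cheb_P_def .
  then show ?thesis by (metis add_diff_cancel_left')
qed

lemma cheb_R_eq: "cheb_R k (t^2) = 2 * (cheb_T (2*k) t - (-1)^k) - 4 * (-1)^k * (2 * real k + 1) * t^2"
  unfolding cheb_R_def cheb_P_eq ..

lemma part1:
  assumes "k \<ge> 1"
  shows "cheb_R k (t^2) = - cheb_R (k - 1) (t^2) + 4 * t * cheb_T (2*k - 1) t
                             + (-1)^(k - 1) * 8 * t^2"
proof -
  obtain m where k: "k = Suc m" using assms by (cases k) auto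
  have T: "cheb_T (2*Suc m) t = 2 * t * cheb_T (2*m+1) t - cheb_T (2*m) t"
    by (simp add: numeral_2_eq_2)
  have e: "2*k - 1 = 2*m+1" "k - 1 = m" using k by auto
  show ?thesis unfolding cheb_R_eq e unfolding k T by (simp add: algebra_simps)
qed

lemma part2:
  assumes "0 < t" "t \<le> 1"
  shows "\<bar>cheb_R k (t^2)\<bar> \<le> t * (4 * (2 * real k + 1) * t
                + 4 * (\<Sum>j=1..k. min 1 ((2 * real j - 1) * t)))"
proof (induction k)
  case 0
  have "cheb_R 0 (t^2) = - 4 * t^2" unfolding cheb_R_eq by simp
  then show ?case using assms by (simp add: power2_eq_square)
next
  case (Suc k)
  have eq: "cheb_R (Suc k) (t^2) = - cheb_R k (t^2) + 4 * t * cheb_T (2*k+1) t + (-1)^k * 8 * t^2"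
    using part1[of "Suc k" t] by simp
  have ab: "\<bar>(-1::real)^k * 8 * t^2\<bar> = 8 * t^2" by (simp add: abs_mult)
  have tb: "\<bar>cheb_T (2*k+1) t\<bar> \<le> min 1 ((2 * real (Suc k) - 1) * t)"
    using cheb_T_le1[of t] cheb_T_odd_bound[of t k] assms by auto
  have "\<bar>cheb_R (Suc k) (t^2)\<bar> \<le> \<bar>cheb_R k (t^2)\<bar> + 4 * t * \<bar>cheb_T (2*k+1) t\<bar> + 8 * t^2"
  proof -
    have "\<bar>4 * t * cheb_T (2*k+1) t\<bar> = 4 * t * \<bar>cheb_T (2*k+1) t\<bar>"
      using assms by (simp add: abs_mult)
    moreover have "\<bar>- cheb_R k (t^2) + 4 * t * cheb_T (2*k+1) t + (-1)^k * 8 * t^2\<bar>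
      \<le> \<bar>- cheb_R k (t^2)\<bar> + \<bar>4 * t * cheb_T (2*k+1) t\<bar> + \<bar>(-1::real)^k * 8 * t^2\<bar>"
      by (rule order_trans[OF abs_triangle_ineq add_right_mono[OF abs_triangle_ineq]])
    ultimately show ?thesis unfolding eq ab by simp
  qed
  also have "\<dots> \<le> t * (4 * (2 * real k + 1) * t + 4 * (\<Sum>j=1..k. min 1 ((2 * real j - 1) * t)))
       + 4 * t * min 1 ((2 * real (Suc k) - 1) * t) + 8 * t^2"
    using Suc tb assms by (intro add_mono mult_left_mono) auto
  also have "\<dots> = t * (4 * (2 * real (Suc k) + 1) * t
                + 4 * (\<Sum>j=1..Suc k. min 1 ((2 * real j - 1) * t)))"
    by (simp add: algebra_simps power2_eq_square)
  finally show ?case .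
qed

theorem mainTheorem2:
  shows "(\<forall>(k::nat) (t::real). k \<ge> 1 \<longrightarrow>
            cheb_R k (t^2) = - cheb_R (k - 1) (t^2) + 4 * t * cheb_T (2*k - 1) t
                             + (-1)^(k - 1) * 8 * t^2)
       \<and> (\<forall>(k::nat) (t::real). 0 < t \<and> t \<le> 1 \<longrightarrow>
            \<bar>cheb_R k (t^2)\<bar> / t \<le> 4 * (2 * real k + 1) * t
                + 4 * (\<Sum>j=1..k. min 1 ((2 * real j - 1) * t)))"
proof (intro conjI allI impI)
  fix k :: nat and t :: real
  assume "k \<ge> 1" then show "cheb_R k (t^2) = - cheb_R (k - 1) (t^2) + 4 * t * cheb_T (2*k - 1) t
                             + (-1)^(k - 1) * 8 * t^2" by (rule part1)
next
  fix k :: nat and t :: real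
  assume h: "0 < t \<and> t \<le> 1"
  then show "\<bar>cheb_R k (t^2)\<bar> / t \<le> 4 * (2 * real k + 1) * t
                + 4 * (\<Sum>j=1..k. min 1 ((2 * real j - 1) * t))"
    using part2[of t k] by (simp add: divide_le_eq mult.commute)
qed

end
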